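(* Let $f=f^{(L)}\circ\cdots\circ f^{(1)}$ with $f^{(\ell)}(\mathbf{u})=\sigma(\mathbf{W}^{(\ell)}\mathbf{u}+\mathbf{b}^{(\ell)})$, $\mathbf{W}^{(\ell)}\in\mathbb{R}^{D^{(\ell+1)}\times D^{(\ell)}}$, $\mathbf{b}^{(\ell)}\in\mathbb{R}^{D^{(\ell+1)}}$, where $\sigma$ is continuous, affine on $(-\infty,0]$ and on $[0,\infty)$, applied coordinatewise. Let $\mathbf{V}\in\mathbb{R}^{P\times D^{(1)}}$ have rows $\mathbf{v}_1^T,\dots,\mathbf{v}_P^T$ and let $R$ be their convex hull. Define recursively $\mathbf{V}^{(1)}=\mathbf{V}$ and, for $\ell=1,\dots,L$: $\mathbf{H}^{(\ell)}=\mathbf{V}^{(\ell)}(\mathbf{W}^{(\ell)})^T+\mathbf{1}_P(\mathbf{b}^{(\ell)})^T$; $s^{(\ell)}_k=1$ if $\#\{i:\mathbf{H}^{(\ell)}_{i,k}>0\}\ge P/2$ and $s^{(\ell)}_k=-1$ otherwise; $c^{(\ell)}_k=s^{(\ell)}_k\max_{p}\max(0,-\mathbf{H}^{(\ell)}_{p,k}s^{(\ell)}_k)$; and $\mathbf{V}^{(\ell+1)}=\sigma(\mathbf{V}^{(\ell)}(\mathbf{W}^{(\ell)})^T+\mathbf{1}_P(\mathbf{b}^{(\ell)}+\mathbf{c}^{(\ell)})^T)$. Let $\tilde f=\tilde f^{(L)}\circ\cdots\circ\tilde f^{(1)}$ with $\tilde f^{(\ell)}(\mathbf{u})=\sigma(\mathbf{W}^{(\ell)}\mathbf{u}+\mathbf{b}^{(\ell)}+\mathbf{c}^{(\ell)})$.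 Then, for arbitrary weights $\mathbf{W}^{(\ell)}$ and biases $\mathbf{b}^{(\ell)}$, $\tilde f$ is affine on $R$.
   Context: $\mathbf{1}_P$ is the all-ones vector of length $P$; $\sigma$ applied to a matrix acts entrywise. The network $\tilde f$ is the "POLICEd" network obtained by shifting each layer's bias by $\mathbf{c}^{(\ell)}$, computed from the vertices propagated through the already-shifted previous layers. *)

theory Defs
  imports "HOL-Analysis.Analysis"
begin

text \<open>Layers are indexed 0,...,L-1 (paper: 1,...,L). Layer l maps
  R^(D l) to R^(D (Suc l)). Vectors are functions nat => real, only coordinates
  below the relevant dimension matter.
  W l k j is entry (k,j) of the weight matrix of layer l, b l k the bias.
  The vertex matrix V has rows V p (p < P), each a vector in R^(D 0).\<close>

definition preact :: "(nat \<Rightarrow> nat \<Rightarrow> nat \<Rightarrow> real) \<Rightarrow> (nat \<Rightarrow> nat \<Rightarrow> real) \<Rightarrow> (nat \<Rightarrow> nat)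
    \<Rightarrow> nat \<Rightarrow> (nat \<Rightarrow> nat \<Rightarrow> real) \<Rightarrow> nat \<Rightarrow> nat \<Rightarrow> real" where
  "preact W b D l Vl p k = (\<Sum>j<D l. Vl p j * W l k j) + b l k"

definition sgnvec :: "nat \<Rightarrow> (nat \<Rightarrow> nat \<Rightarrow> real) \<Rightarrow> nat \<Rightarrow> real" where
  "sgnvec P H k = (if real (card {i. i < P \<and> H i k > 0}) \<ge> real P / 2 then 1 else -1)"

definition shiftvec :: "nat \<Rightarrow> (nat \<Rightarrow> nat \<Rightarrow> real) \<Rightarrow> nat \<Rightarrow> real" where
  "shiftvec P H k = sgnvec P H k * Max ((\<lambda>p. max 0 (- H p k * sgnvec P H k)) ` {..<P})"

text \<open>Propagated vertex matrices: policedV ... 0 = V (paper V^(1)),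
  policedV ... (Suc l) = sigma(Vl W^T + 1_P (b + c)^T) (paper V^(l+2)).\<close>
primrec policedV :: "(real \<Rightarrow> real) \<Rightarrow> (nat \<Rightarrow> nat \<Rightarrow> nat \<Rightarrow> real) \<Rightarrow> (nat \<Rightarrow> nat \<Rightarrow> real)
    \<Rightarrow> (nat \<Rightarrow> nat) \<Rightarrow> nat \<Rightarrow> (nat \<Rightarrow> nat \<Rightarrow> real) \<Rightarrow> nat \<Rightarrow> (nat \<Rightarrow> nat \<Rightarrow> real)" where
  "policedV \<sigma> W b D P V 0 = V"
| "policedV \<sigma> W b D P V (Suc l) =
     (\<lambda>p k. \<sigma> (preact W b D l (policedV \<sigma> W b D P V l) p k
               + shiftvec P (preact W b D l (policedV \<sigma> W b D P V l)) k))"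

definition policedc :: "(real \<Rightarrow> real) \<Rightarrow> (nat \<Rightarrow> nat \<Rightarrow> nat \<Rightarrow> real) \<Rightarrow> (nat \<Rightarrow> nat \<Rightarrow> real)
    \<Rightarrow> (nat \<Rightarrow> nat) \<Rightarrow> nat \<Rightarrow> (nat \<Rightarrow> nat \<Rightarrow> real) \<Rightarrow> nat \<Rightarrow> nat \<Rightarrow> real" where
  "policedc \<sigma> W b D P V l = shiftvec P (preact W b D l (policedV \<sigma> W b D P V l))"

primrec policed_net :: "(real \<Rightarrow> real) \<Rightarrow> (nat \<Rightarrow> nat \<Rightarrow> nat \<Rightarrow> real) \<Rightarrow> (nat \<Rightarrow> nat \<Rightarrow> real)
    \<Rightarrow> (nat \<Rightarrow> nat) \<Rightarrow> nat \<Rightarrow> (nat \<Rightarrow> nat \<Rightarrow> real) \<Rightarrow> nat \<Rightarrow> (nat \<Rightarrow> real) \<Rightarrow> (nat \<Rightarrow> real)" where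
  "policed_net \<sigma> W b D P V 0 u = u"
| "policed_net \<sigma> W b D P V (Suc l) u =
     (\<lambda>k. \<sigma> ((\<Sum>j<D l. W l k j * policed_net \<sigma> W b D P V l u j) + b l k
              + policedc \<sigma> W b D P V l k))"

definition rows_hull :: "nat \<Rightarrow> nat \<Rightarrow> (nat \<Rightarrow> nat \<Rightarrow> real) \<Rightarrow> (nat \<Rightarrow> real) set" where
  "rows_hull n P V = {x. (\<forall>j. j \<ge> n \<longrightarrow> x j = 0) \<and>
      (\<exists>\<mu>::nat \<Rightarrow> real. (\<forall>p<P. \<mu> p \<ge> 0) \<and> (\<Sum>p<P. \<mu> p) = 1 \<and>
          (\<forall>j<n. x j = (\<Sum>p<P. \<mu> p * V p j)))}"

definition affine_on :: "nat \<Rightarrow> nat \<Rightarrow> ((nat \<Rightarrow> real) \<Rightarrow> (nat \<Rightarrow> real)) \<Rightarrow> (nat \<Rightarrow> real) set \<Rightarrow> bool" where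
  "affine_on n m F S = (\<exists>(A::nat \<Rightarrow> nat \<Rightarrow> real) (d::nat \<Rightarrow> real).
      \<forall>x\<in>S. \<forall>k<m. F x k = (\<Sum>j<n. A k j * x j) + d k)"

end

theory Submission
  imports Defs
begin

lemma comb_lemma:
  fixes \<mu> x :: "nat \<Rightarrow> real" and V :: "nat \<Rightarrow> nat \<Rightarrow> real"
  assumes "(\<Sum>p<P. \<mu> p) = 1" "\<forall>i<n. x i = (\<Sum>p<P. \<mu> p * V p i)"
  shows "(\<Sum>i<n. A i * x i) + d = (\<Sum>p<P. \<mu> p * ((\<Sum>i<n. A i * V p i) + d))"
proof -
  have "(\<Sum>i<n. A i * x i) = (\<Sum>i<n. A i * (\<Sum>p<P. \<mu> p * V p i))"
    using assms(2) by (intro sum.cong) auto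
  also have "\<dots> = (\<Sum>p<P. \<mu> p * (\<Sum>i<n. A i * V p i))"
    by (simp add: sum_distrib_left sum.swap[of _ "{..<n}"] mult.assoc mult.left_commute)
  finally have 1: "(\<Sum>i<n. A i * x i) = (\<Sum>p<P. \<mu> p * (\<Sum>i<n. A i * V p i))" .
  have 2: "d = (\<Sum>p<P. \<mu> p * d)" using assms(1) by (simp add: sum_distrib_right[symmetric])
  show ?thesis by (subst 1, subst 2) (simp add: distrib_left sum.distrib)
qed

lemma sign_lemma:
  assumes "p < (P::nat)"
  shows "sgnvec P H k = 1 \<Longrightarrow> H p k + shiftvec P H k \<ge> 0"
    and "sgnvec P H k \<noteq> 1 \<Longrightarrow> H p k + shiftvec P H k \<le> 0"
proof -
  have fin: "finite ((\<lambda>p. max 0 (- H p k * sgnvec P H k)) ` {..<P})" by simp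
  have ge: "Max ((\<lambda>p. max 0 (- H p k * sgnvec P H k)) ` {..<P}) \<ge> max 0 (- H p k * sgnvec P H k)"
    using assms by (intro Max_ge[OF fin]) auto
  { assume "sgnvec P H k = 1"
    then show "H p k + shiftvec P H k \<ge> 0" using ge unfolding shiftvec_def by simp }
  { assume "sgnvec P H k \<noteq> 1"
    then have "sgnvec P H k = -1" unfolding sgnvec_def by (auto split: if_splits)
    then show "H p k + shiftvec P H k \<le> 0" using ge unfolding shiftvec_def by simp }
qed

lemma sum_swap_lemma:
  fixes W :: "nat \<Rightarrow> real" and A :: "nat \<Rightarrow> nat \<Rightarrow> real"
  shows "(\<Sum>j<m. W j * ((\<Sum>i<n. A j i * y i) + d j))
       = (\<Sum>i<n. (\<Sum>j<m. W j * A j i) * y i) + (\<Sum>j<m. W j * d j)"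
  by (simp add: distrib_left sum.distrib sum_distrib_left sum_distrib_right
      sum.swap[of _ "{..<m}"] mult.assoc)

theorem mainTheorem3:
  fixes \<sigma> :: "real \<Rightarrow> real"
    and L P :: nat
    and D :: "nat \<Rightarrow> nat"
    and W :: "nat \<Rightarrow> nat \<Rightarrow> nat \<Rightarrow> real"
    and b :: "nat \<Rightarrow> nat \<Rightarrow> real"
    and V :: "nat \<Rightarrow> nat \<Rightarrow> real"
  assumes cont: "continuous_on UNIV \<sigma>"
    and neg: "\<exists>a0 a1. \<forall>x\<le>0. \<sigma> x = a1 * x + a0"
    and pos: "\<exists>a0 a1. \<forall>x\<ge>0. \<sigma> x = a1 * x + a0"
  shows "affine_on (D 0) (D L) (policed_net \<sigma> W b D P V L) (rows_hull (D 0) P V)"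
proof -
  obtain n0 n1 where nn: "\<forall>x\<le>0. \<sigma> x = n1 * x + n0" using neg by blast
  obtain p0 p1 where pp: "\<forall>x\<ge>0. \<sigma> x = p1 * x + p0" using pos by blast
  let ?R = "rows_hull (D 0) P V"
  let ?N = "policed_net \<sigma> W b D P V"
  let ?PV = "policedV \<sigma> W b D P V"
  have "\<exists>A d. (\<forall>x\<in>?R. \<forall>k<D l. ?N l x k = (\<Sum>i<D 0. A k i * x i) + d k)
     \<and> (\<forall>p<P. \<forall>k<D l. (\<Sum>i<D 0. A k i * V p i) + d k = ?PV l p k)" for l
  proof (induction l)
    case 0
    show ?case
    proof (intro exI[of _ "\<lambda>k i. if k = i then 1 else 0"] exI[of _ "\<lambda>k. 0"] conjI ballI allI impI)
      fix x k assume "k < D 0"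
      then show "?N 0 x k = (\<Sum>i<D 0. (if k = i then 1 else 0) * x i) + 0"
        by (simp add: sum.delta if_distrib[where f="\<lambda>a. a * _"] cong: if_cong)
    next
      fix p k assume "k < D 0"
      then show "(\<Sum>i<D 0. (if k = i then 1 else 0) * V p i) + 0 = ?PV 0 p k"
        by (simp add: sum.delta if_distrib[where f="\<lambda>a. a * _"] cong: if_cong)
    qed
  next
    case (Suc l)
    then obtain A d where
      IH1: "\<forall>x\<in>?R. \<forall>k<D l. ?N l x k = (\<Sum>i<D 0. A k i * x i) + d k" and
      IH2: "\<forall>p<P. \<forall>k<D l. (\<Sum>i<D 0. A k i * V p i) + d k = ?PV l p k" by blast
    define H where "H = preact W b D l (?PV l)"
    define c where "c = shiftvec P H"
    define A' where "A' k i = (\<Sum>j<D l. W l k j * A j i)" for k i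
    define d' where "d' k = (\<Sum>j<D l. W l k j * d j) + b l k + c k" for k
    define a1 where "a1 k = (if sgnvec P H k = 1 then p1 else n1)" for k
    define a0 where "a0 k = (if sgnvec P H k = 1 then p0 else n0)" for k
    have F1: "(\<Sum>j<D l. W l k j * ?N l x j) + b l k + c k = (\<Sum>i<D 0. A' k i * x i) + d' k"
      if "x \<in> ?R" for x k
    proof -
      have "(\<Sum>j<D l. W l k j * ?N l x j) = (\<Sum>j<D l. W l k j * ((\<Sum>i<D 0. A j i * x i) + d j))"
        using IH1 that by (intro sum.cong) auto
      then show ?thesis unfolding A'_def d'_def by (simp add: sum_swap_lemma)
    qed
    have F2: "(\<Sum>i<D 0. A' k i * V p i) + d' k = H p k + c k" if "p < P" for p k
    proof -
      have "(\<Sum>j<D l. ?PV l p j * W l k j) = (\<Sum>j<D l. W l k j * ((\<Sum>i<D 0. A j i * V p i) + d j))"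
        using IH2 that by (intro sum.cong) (auto simp: mult.commute)
      then show ?thesis unfolding A'_def d'_def H_def preact_def by (simp add: sum_swap_lemma)
    qed
    have sig: "\<sigma> (H p k + c k) = a1 k * (H p k + c k) + a0 k" if "p < P" for p k
      using sign_lemma[OF that, of H k] nn pp unfolding a1_def a0_def c_def by auto
    show ?case
    proof (intro exI[of _ "\<lambda>k i. a1 k * A' k i"] exI[of _ "\<lambda>k. a1 k * d' k + a0 k"] conjI ballI allI impI)
      fix x k assume xR: "x \<in> ?R" and "k < D (Suc l)"
      then obtain \<mu> where mu: "\<forall>p<P. \<mu> p \<ge> 0" "(\<Sum>p<P. \<mu> p) = 1"
          "\<forall>j<D 0. x j = (\<Sum>p<P. \<mu> p * V p j)"
        unfolding rows_hull_def by blast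
      define z where "z = (\<Sum>i<D 0. A' k i * x i) + d' k"
      have zc: "z = (\<Sum>p<P. \<mu> p * (H p k + c k))"
        unfolding z_def comb_lemma[OF mu(2) mu(3)] using F2 by (intro sum.cong) auto
      have "\<sigma> z = a1 k * z + a0 k"
      proof (cases "sgnvec P H k = 1")
        case True
        have "z \<ge> 0" unfolding zc using mu(1) sign_lemma(1)[OF _ True] c_def
          by (intro sum_nonneg) auto
        then show ?thesis using pp True a1_def a0_def by auto
      next
        case False
        have "z \<le> 0" unfolding zc using mu(1) sign_lemma(2)[OF _ False] c_def
          by (intro sum_nonpos) (auto intro: mult_nonneg_nonpos)
        then show ?thesis using nn False a1_def a0_def by auto
      qed
      moreover have "?N (Suc l) x k = \<sigma> z"
        using F1[OF xR, of k] unfolding z_def by (simp add: policedc_def H_def c_def)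
      ultimately show "?N (Suc l) x k = (\<Sum>i<D 0. a1 k * A' k i * x i) + (a1 k * d' k + a0 k)"
        unfolding z_def by (simp add: sum_distrib_left distrib_left mult.assoc)
    next
      fix p k assume "p < P" "k < D (Suc l)"
      have "?PV (Suc l) p k = \<sigma> (H p k + c k)" by (simp add: H_def c_def)
      also have "\<dots> = a1 k * (H p k + c k) + a0 k" using sig[OF \<open>p < P\<close>] .
      also have "\<dots> = a1 k * ((\<Sum>i<D 0. A' k i * V p i) + d' k) + a0 k" using F2[OF \<open>p < P\<close>] by simp
      finally show "(\<Sum>i<D 0. a1 k * A' k i * V p i) + (a1 k * d' k + a0 k) = ?PV (Suc l) p k"
        by (simp add: sum_distrib_left distrib_left mult.assoc)
    qed
  qed
  then show ?thesis unfolding affine_on_def by blast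
qed

end
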